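(* Assume $(H_S(\infty))$ and let $\mathbf a_\lambda,\mathbf n_\lambda,\mathbf m_\lambda$ be as in the context. Let $(N^S_t(i))_{t\ge0,i\in\mathbb{Z}}$ be i.i.d. $SR(\mu_S)$-processes and $a<b$. Then: (i) for $t<1$, $\lim_{\lambda\to0}\Pr[\forall i\in\{\lfloor a\mathbf m_\lambda\rfloor,\dots,\lfloor b\mathbf m_\lambda\rfloor\},\ N^S_{\mathbf a_\lambda t}(i)>0]=0$; (ii) for $t\ge1$, the same probability tends to $1$; (iii) for $t<1$, $\lim_{\lambda\to0}\Pr[\forall i\in\{\lfloor a\mathbf n_\lambda\rfloor,\dots,\lfloor b\mathbf n_\lambda\rfloor\},\ N^S_{\mathbf a_\lambda t}(i)>0]=0$; (iv) for $t>1$, the probability in (iii) tends to $1$; (v) for $t>0$, $\lim_{\lambda\to0}\Pr[\exists i\in\{\lfloor a\mathbf m_\lambda\rfloor,\dots,\lfloor b\mathbf m_\lambda\rfloor\},\ N^S_{\mathbf a_\lambda t}(i)>0]=1$.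
   Context: $(H_S(\infty))$: $\mu_S$ is a probability measure on $(0,\infty)$ with unbounded support and finite mean $m_S$; with $\nu_S(dt)=m_S^{-1}\mu_S((t,\infty))dt$, for all $t>0$, $\lim_{x\to\infty}\nu_S((x,\infty))/\nu_S((tx,\infty))=t^\infty$ ($=0,1,\infty$ according as $t<1,t=1,t>1$). $\mathbf a_\lambda$ is the unique solution of $\lambda\mathbf a_\lambda=\nu_S((\mathbf a_\lambda,\infty))$, $\mathbf n_\lambda=\lfloor1/(\lambda\mathbf a_\lambda)\rfloor$, and $\mathbf m_\lambda:(0,1]\to\mathbb{N}$ is non-increasing with $\mathbf m_\lambda\to\infty$, $\mathbf m_\lambda/\mathbf n_\lambda\to0$, and $\mathbf m_\lambda\nu_S((\mathbf a_\lambda z,\infty))\to\infty$ for every $z\in[0,1)$, as $\lambda\to0$. A $SR(\mu)$-process: $N_t=\#\{k\ge1:T_k\le t\}$ with $T_1\sim\nu_\mu(dt)=m_\mu^{-1}\mu((t,\infty))dt$, $T_{k+1}=T_k+X_k$, $(X_k)$ i.i.d. with law $\mu$ independent of $T_1$. *)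

theory Defs
  imports "HOL-Probability.Probability"
begin

definition mean_of :: "real measure \<Rightarrow> real" where
  "mean_of \<mu> = (\<integral>x. x \<partial>\<mu>)"

text \<open>Stationary delay law: nu(dt) = m^{-1} mu((t,inf)) dt on (0,inf).\<close>
definition nu_of :: "real measure \<Rightarrow> real measure" where
  "nu_of \<mu> = density lborel
     (\<lambda>t. ennreal (indicator {0<..} t * measure \<mu> {t<..} / mean_of \<mu>))"

definition nu_tail :: "real measure \<Rightarrow> real \<Rightarrow> real" where
  "nu_tail \<mu> x = measure (nu_of \<mu>) {x<..}"

definition H_S_infty :: "real measure \<Rightarrow> bool" where
  "H_S_infty \<mu> \<longleftrightarrow>
     prob_space \<mu> \<and> sets \<mu> = sets borel \<and> measure \<mu> {..0} = 0 \<and>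
     (\<forall>x. measure \<mu> {x<..} > 0) \<and>
     integrable \<mu> (\<lambda>x. x) \<and>
     (\<forall>t>0. (t < 1 \<longrightarrow> ((\<lambda>x. nu_tail \<mu> x / nu_tail \<mu> (t * x)) \<longlongrightarrow> 0) at_top) \<and>
            (t = 1 \<longrightarrow> ((\<lambda>x. nu_tail \<mu> x / nu_tail \<mu> (t * x)) \<longlongrightarrow> 1) at_top) \<and>
            (t > 1 \<longrightarrow> filterlim (\<lambda>x. nu_tail \<mu> x / nu_tail \<mu> (t * x)) at_top at_top))"

definition a_of :: "real measure \<Rightarrow> real \<Rightarrow> real" where
  "a_of \<mu> l = (THE a. l * a = nu_tail \<mu> a)"

definition n_of :: "real measure \<Rightarrow> real \<Rightarrow> nat" where
  "n_of \<mu> l = nat \<lfloor>1 / (l * a_of \<mu> l)\<rfloor>"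

text \<open>Admissible m_lambda : (0,1] -> N (values outside (0,1] are irrelevant).\<close>
definition admissible_m :: "real measure \<Rightarrow> (real \<Rightarrow> nat) \<Rightarrow> bool" where
  "admissible_m \<mu> m \<longleftrightarrow>
     (\<forall>l1 l2. 0 < l1 \<longrightarrow> l1 \<le> l2 \<longrightarrow> l2 \<le> 1 \<longrightarrow> m l2 \<le> m l1) \<and>
     filterlim m at_top (at_right 0) \<and>
     ((\<lambda>l. real (m l) / real (n_of \<mu> l)) \<longlongrightarrow> 0) (at_right 0) \<and>
     (\<forall>z. 0 \<le> z \<and> z < 1 \<longrightarrow>
        filterlim (\<lambda>l. real (m l) * nu_tail \<mu> (a_of \<mu> l * z)) at_top (at_right 0))"

text \<open>Renewal times of process i: SR_time .. i k = T_{k+1}(i);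
  T_1(i) = T1 i, T_{k+1}(i) = T_k(i) + X_k(i) (X i k stands for X_{k+1}).\<close>
fun SR_time :: "(int \<Rightarrow> 'w \<Rightarrow> real) \<Rightarrow> (int \<Rightarrow> nat \<Rightarrow> 'w \<Rightarrow> real) \<Rightarrow> int \<Rightarrow> nat \<Rightarrow> 'w \<Rightarrow> real" where
  "SR_time T1 X i 0 w = T1 i w"
| "SR_time T1 X i (Suc k) w = SR_time T1 X i k w + X i k w"

definition SR_count :: "(int \<Rightarrow> 'w \<Rightarrow> real) \<Rightarrow> (int \<Rightarrow> nat \<Rightarrow> 'w \<Rightarrow> real) \<Rightarrow> int \<Rightarrow> real \<Rightarrow> 'w \<Rightarrow> nat" where
  "SR_count T1 X i t w = card {k. SR_time T1 X i k w \<le> t}"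

definition iid_SR_family :: "'w measure \<Rightarrow> real measure \<Rightarrow> (int \<Rightarrow> 'w \<Rightarrow> real) \<Rightarrow> (int \<Rightarrow> nat \<Rightarrow> 'w \<Rightarrow> real) \<Rightarrow> bool" where
  "iid_SR_family M \<mu> T1 X \<longleftrightarrow>
     prob_space M \<and>
     prob_space.indep_vars M (\<lambda>_. borel)
       (\<lambda>j. case j of Inl i \<Rightarrow> T1 i | Inr (i, k) \<Rightarrow> X i k) UNIV \<and>
     (\<forall>i. distr M borel (T1 i) = nu_of \<mu>) \<and>
     (\<forall>i k. distr M borel (X i k) = \<mu>)"

definition all_pos_prob where
  "all_pos_prob M T1 X I s = measure M {w \<in> space M. \<forall>i\<in>I. SR_count T1 X i s w > 0}"

definition some_pos_prob where
  "some_pos_prob M T1 X I s = measure M {w \<in> space M. \<exists>i\<in>I. SR_count T1 X i s w > 0}"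

end

theory Submission
  imports Defs
begin


lemma SR_time_ge: assumes "\<forall>k. X i k w \<ge> 0"
  shows "SR_time T1 X i k w \<ge> T1 i w"
  using assms by (induction k) (auto intro: order_trans)

lemma SR_time_mono: assumes "\<forall>k. X i k w \<ge> 0" and "k \<le> k'"
  shows "SR_time T1 X i k w \<le> SR_time T1 X i k' w"
  using assms(2)
proof (induction k' rule: dec_induct)
  case base then show ?case by simp
next
  case (step n) then show ?case using assms(1) by (smt (verit) SR_time.simps(2))
qed

lemma SR_time_diverge:
  assumes nn: "\<forall>k. X i k w \<ge> 0" and inf: "\<forall>N. \<exists>j\<ge>N. X i j w > 1"
  shows "\<exists>N. \<forall>k\<ge>N. s < SR_time T1 X i k w"
proof -
  have c: "\<exists>K. SR_time T1 X i K w \<ge> T1 i w + real n" for n :: nat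
  proof (induction n)
    case 0 then show ?case by (intro exI[of _ 0]) simp
  next
    case (Suc n)
    then obtain K where K: "SR_time T1 X i K w \<ge> T1 i w + real n" by blast
    obtain j where j: "j \<ge> K" "X i j w > 1" using inf by blast
    have "SR_time T1 X i K w \<le> SR_time T1 X i j w" using SR_time_mono[where X=X and i=i and w=w, OF nn j(1)] .
    then have "SR_time T1 X i (Suc j) w \<ge> T1 i w + real (Suc n)" using K j by simp
    then show ?case by blast
  qed
  obtain K where K: "SR_time T1 X i K w \<ge> T1 i w + real (nat \<lceil>s - T1 i w\<rceil> + 1)"
    using c by blast
  have "s < SR_time T1 X i K w" using K by linarith
  then have "\<forall>k\<ge>K. s < SR_time T1 X i k w" using SR_time_mono[where X=X and i=i and w=w, OF nn] by (meson less_le_trans)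
  then show ?thesis by blast
qed

lemma SR_count_pos_iff:
  "(0 < SR_count T1 X i s w) \<longleftrightarrow>
     (\<exists>N. \<forall>k. N \<le> k \<longrightarrow> s < SR_time T1 X i k w) \<and> (\<exists>k. SR_time T1 X i k w \<le> s)"
proof -
  let ?S = "{k. SR_time T1 X i k w \<le> s}"
  have fin: "finite ?S \<longleftrightarrow> (\<exists>N. \<forall>k. N \<le> k \<longrightarrow> s < SR_time T1 X i k w)"
    unfolding finite_nat_set_iff_bounded by (auto simp: not_le) (meson leD not_le_imp_less)+
  show ?thesis unfolding SR_count_def by (subst card_gt_0_iff) (auto simp: fin)
qed

lemma SR_count_pos_iff_T1:
  assumes nn: "\<forall>k. X i k w \<ge> 0" and inf: "\<forall>N. \<exists>j\<ge>N. X i j w > 1"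
  shows "(0 < SR_count T1 X i s w) \<longleftrightarrow> T1 i w \<le> s"
  unfolding SR_count_pos_iff using SR_time_diverge[where X=X and i=i and w=w, OF nn inf, of s] SR_time_ge[where X=X and i=i and w=w, OF nn]
  by (metis SR_time.simps(1) order_trans)




lemma (in prob_space) indep_prod_image:
  assumes "indep_vars (\<lambda>_. borel) Y UNIV" "finite I" "I \<noteq> {}" "inj_on g I"
    "\<And>i. i\<in>I \<Longrightarrow> B i \<in> sets borel"
  shows "prob (\<Inter>i\<in>I. Y (g i) -` B i \<inter> space M) = (\<Prod>i\<in>I. prob (Y (g i) -` B i \<inter> space M))"
proof -
  have ind: "indep_sets (\<lambda>j. {Y j -` A \<inter> space M | A. A \<in> sets borel}) UNIV"
    using assms(1) unfolding indep_vars_def2 by simp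
  have "prob (\<Inter>j\<in>g`I. Y j -` B (the_inv_into I g j) \<inter> space M)
      = (\<Prod>j\<in>g`I. prob (Y j -` B (the_inv_into I g j) \<inter> space M))"
    by (rule indep_setsD[OF ind]) (use assms in \<open>auto simp: the_inv_into_f_f\<close>)
  moreover have "(\<Inter>j\<in>g`I. Y j -` B (the_inv_into I g j) \<inter> space M) = (\<Inter>i\<in>I. Y (g i) -` B i \<inter> space M)"
    using the_inv_into_f_f[OF assms(4)] by auto
  moreover have "(\<Prod>j\<in>g`I. prob (Y j -` B (the_inv_into I g j) \<inter> space M)) = (\<Prod>i\<in>I. prob (Y (g i) -` B i \<inter> space M))"
    by (subst prod.reindex[OF assms(4)]) (auto simp: the_inv_into_f_f[OF assms(4)] intro!: prod.cong)
  ultimately show ?thesis by simp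
qed

lemma iid_meas:
  assumes "iid_SR_family M \<mu> T1 X"
  shows "T1 i \<in> borel_measurable M" "X i k \<in> borel_measurable M"
proof -
  interpret prob_space M using assms unfolding iid_SR_family_def by simp
  have "\<forall>j\<in>UNIV. random_variable borel (case j of Inl i \<Rightarrow> T1 i | Inr (i, k) \<Rightarrow> X i k)"
    using assms unfolding iid_SR_family_def indep_vars_def2 by blast
  from this[rule_format, of "Inl i"] this[rule_format, of "Inr (i,k)"]
  show "T1 i \<in> borel_measurable M" "X i k \<in> borel_measurable M" by auto
qed

lemma SR_time_meas:
  assumes "iid_SR_family M \<mu> T1 X"
  shows "SR_time T1 X i k \<in> borel_measurable M"
proof (induction k)
  case 0 then show ?case using iid_meas[OF assms] by (simp add: SR_time.simps(1)[abs_def])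
next
  case (Suc k)
  have "SR_time T1 X i (Suc k) = (\<lambda>w. SR_time T1 X i k w + X i k w)" by auto
  then show ?case using Suc iid_meas[OF assms] by simp
qed

lemma X_pos_AE:
  assumes iid: "iid_SR_family M \<mu> T1 X" and mu: "prob_space \<mu>" "sets \<mu> = sets borel"
    "measure \<mu> {..0} = 0"
  shows "AE w in M. \<forall>i k. 0 < X i k w"
proof -
  interpret mu: prob_space \<mu> by fact
  have sp: "space \<mu> = UNIV" using sets_eq_imp_space_eq[OF mu(2)] by simp
  have "AE x in \<mu>. 0 < x"
    by (subst AE_iff_measurable[of "{..0}"]) (auto simp: sp mu(2) mu(3) mu.emeasure_eq_measure)
  then have "AE w in M. 0 < X i k w" for i k
    using iid unfolding iid_SR_family_def
    by (intro AE_distrD[of "X i k" M borel]) (auto simp: iid_meas[OF iid])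
  then show ?thesis by (simp add: AE_all_countable)
qed




lemma X_inf_AE:
  assumes iid: "iid_SR_family M \<mu> T1 X" and mu: "prob_space \<mu>" "sets \<mu> = sets borel"
    "measure \<mu> {1<..} > 0"
  shows "AE w in M. \<forall>i N. \<exists>j\<ge>N. 1 < X i j w"
proof -
  interpret prob_space M using iid unfolding iid_SR_family_def by simp
  interpret mu: prob_space \<mu> by fact
  have ind: "indep_vars (\<lambda>_. borel) (\<lambda>j. case j of Inl i \<Rightarrow> T1 i | Inr (i, k) \<Rightarrow> X i k) UNIV"
    using iid unfolding iid_SR_family_def by simp
  have sp: "space \<mu> = UNIV" using sets_eq_imp_space_eq[OF mu(2)] by simp
  define q where "q = measure \<mu> {1<..}"
  have q: "0 < q" "q \<le> 1" using mu(3) by (auto simp: q_def)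
  have pj: "prob (X i j -` {..1} \<inter> space M) = 1 - q" for i j
  proof -
    have "prob (X i j -` {..1} \<inter> space M) = measure (distr M borel (X i j)) {..1}"
      by (simp add: measure_distr iid_meas[OF iid])
    also have "\<dots> = measure \<mu> {..1}" using iid unfolding iid_SR_family_def by simp
    also have "\<dots> = measure \<mu> (space \<mu> - {1<..})" by (rule arg_cong[where f="measure \<mu>"]) (auto simp: sp)
    also have "\<dots> = 1 - q" unfolding q_def by (subst mu.prob_compl) (auto simp: mu(2))
    finally show ?thesis .
  qed
  have "AE w in M. \<exists>j\<ge>N. 1 < X i j w" for i N
  proof -
    define C where "C = {w\<in>space M. \<forall>j\<ge>N. X i j w \<le> 1}"
    have Cm: "C \<in> events" unfolding C_def using iid_meas[OF iid] by measurable
    have bound: "prob C \<le> (1 - q) ^ Suc K" for K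
    proof -
      have "C \<subseteq> (\<Inter>j\<in>{N..<N + Suc K}. (\<lambda>j. case j of Inl i \<Rightarrow> T1 i | Inr (i, k) \<Rightarrow> X i k) ((\<lambda>j. Inr (i,j)) j) -` {..1} \<inter> space M)"
        unfolding C_def by auto
      then have "prob C \<le> prob (\<Inter>j\<in>{N..<N + Suc K}. (\<lambda>j. case j of Inl i \<Rightarrow> T1 i | Inr (i, k) \<Rightarrow> X i k) ((\<lambda>j. Inr (i,j)) j) -` {..1} \<inter> space M)"
        using Cm iid_meas[OF iid] by (intro finite_measure_mono) (auto intro!: sets.finite_INT)
      also have "\<dots> = (\<Prod>j\<in>{N..<N + Suc K}. prob ((\<lambda>j. case j of Inl i \<Rightarrow> T1 i | Inr (i, k) \<Rightarrow> X i k) ((\<lambda>j. Inr (i,j)) j) -` {..1} \<inter> space M))"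
        by (rule indep_prod_image[OF ind]) (auto simp: inj_on_def)
      also have "\<dots> = (1 - q) ^ Suc K" by (simp add: pj)
      finally show ?thesis .
    qed
    have "(\<lambda>K. (1 - q) ^ Suc K) \<longlonglongrightarrow> 0"
      using q by (intro LIMSEQ_Suc[OF LIMSEQ_power_zero]) auto
    then have "prob C \<le> 0" using bound by (intro LIMSEQ_le_const[of "\<lambda>K. (1 - q) ^ Suc K"]) auto
    then have "prob C = 0" by (simp add: measure_le_0_iff)
    then show ?thesis
      by (subst AE_iff_measurable[of C]) (auto simp: C_def emeasure_eq_measure Cm[unfolded C_def] not_less)
  qed
  then show ?thesis by (simp add: AE_all_countable)
qed




lemma prob_formulas:
  assumes iid: "iid_SR_family M \<mu> T1 X" and mu: "prob_space \<mu>" "sets \<mu> = sets borel"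
    "measure \<mu> {..0} = 0" "measure \<mu> {1<..} > 0"
    and I: "finite I" "I \<noteq> {}"
  shows "all_pos_prob M T1 X I s = (1 - nu_tail \<mu> s) ^ card I"
    and "some_pos_prob M T1 X I s = 1 - nu_tail \<mu> s ^ card I"
proof -
  interpret prob_space M using iid unfolding iid_SR_family_def by simp
  have ind: "indep_vars (\<lambda>_. borel) (\<lambda>j. case j of Inl i \<Rightarrow> T1 i | Inr (i, k) \<Rightarrow> X i k) UNIV"
    using iid unfolding iid_SR_family_def by simp
  have good: "AE w in M. \<forall>i. (0 < SR_count T1 X i s w \<longleftrightarrow> T1 i w \<le> s)"
    using X_pos_AE[OF iid mu(1,2,3)] X_inf_AE[OF iid mu(1,2,4)]
  proof eventually_elim
    case (elim w)
    show ?case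
    proof
      fix i
      show "(0 < SR_count T1 X i s w \<longleftrightarrow> T1 i w \<le> s)"
        by (rule SR_count_pos_iff_T1) (use elim in \<open>auto simp: less_imp_le\<close>)
    qed
  qed
  note SR_time_meas[OF iid, measurable] iid_meas[OF iid, measurable]
  have nuprob: "prob_space (nu_of \<mu>)"
    using iid prob_space_distr[of "T1 0" borel] iid_meas[OF iid] unfolding iid_SR_family_def by metis
  have nusets: "sets (nu_of \<mu>) = sets borel" unfolding nu_of_def by simp
  have p1: "prob (T1 i -` {..s} \<inter> space M) = 1 - nu_tail \<mu> s" for i
  proof -
    have "prob (T1 i -` {..s} \<inter> space M) = measure (distr M borel (T1 i)) {..s}"
      by (simp add: measure_distr)
    also have "\<dots> = measure (nu_of \<mu>) {..s}" using iid unfolding iid_SR_family_def by simp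
    also have "\<dots> = measure (nu_of \<mu>) (space (nu_of \<mu>) - {s<..})"
      using sets_eq_imp_space_eq[OF nusets] by (intro arg_cong[where f="measure (nu_of \<mu>)"]) auto
    also have "\<dots> = 1 - nu_tail \<mu> s" unfolding nu_tail_def
      by (subst prob_space.prob_compl[OF nuprob]) (auto simp: nusets)
    finally show ?thesis .
  qed
  have p2: "prob (T1 i -` {s<..} \<inter> space M) = nu_tail \<mu> s" for i
  proof -
    have "prob (T1 i -` {s<..} \<inter> space M) = measure (distr M borel (T1 i)) {s<..}"
      by (simp add: measure_distr)
    also have "\<dots> = nu_tail \<mu> s" using iid unfolding iid_SR_family_def nu_tail_def by simp
    finally show ?thesis .
  qed
  have Em: "{w\<in>space M. \<forall>i\<in>I. 0 < SR_count T1 X i s w} \<in> sets M"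
    unfolding SR_count_pos_iff using I by measurable
  have Fm: "(\<Inter>i\<in>I. T1 i -` {..s} \<inter> space M) \<in> sets M" using I by measurable
  have "all_pos_prob M T1 X I s = prob (\<Inter>i\<in>I. T1 i -` {..s} \<inter> space M)"
    unfolding all_pos_prob_def
    by (rule measure_eq_AE[OF _ Em Fm]) (use good I in \<open>auto\<close>)
  also have "\<dots> = (\<Prod>i\<in>I. prob ((\<lambda>j. case j of Inl i \<Rightarrow> T1 i | Inr (i, k) \<Rightarrow> X i k) (Inl i) -` {..s} \<inter> space M))"
    by (subst indep_prod_image[OF ind I, symmetric]) auto
  also have "\<dots> = (1 - nu_tail \<mu> s) ^ card I" by (simp add: p1)
  finally show "all_pos_prob M T1 X I s = (1 - nu_tail \<mu> s) ^ card I" .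
  have Em2: "{w\<in>space M. \<exists>i\<in>I. 0 < SR_count T1 X i s w} \<in> sets M"
    unfolding SR_count_pos_iff using I by measurable
  have Gm: "(\<Inter>i\<in>I. T1 i -` {s<..} \<inter> space M) \<in> sets M" using I by measurable
  have "prob (space M - {w\<in>space M. \<exists>i\<in>I. 0 < SR_count T1 X i s w}) = prob (\<Inter>i\<in>I. T1 i -` {s<..} \<inter> space M)"
  proof (rule measure_eq_AE)
    show "AE x in M. (x \<in> space M - {w\<in>space M. \<exists>i\<in>I. 0 < SR_count T1 X i s w}) = (x \<in> (\<Inter>i\<in>I. T1 i -` {s<..} \<inter> space M))"
      using good by eventually_elim (use I in \<open>auto simp: not_le\<close>)
  qed (use Em2 Gm in auto)
  also have "\<dots> = (\<Prod>i\<in>I. prob ((\<lambda>j. case j of Inl i \<Rightarrow> T1 i | Inr (i, k) \<Rightarrow> X i k) (Inl i) -` {s<..} \<inter> space M))"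
    by (subst indep_prod_image[OF ind I, symmetric]) auto
  also have "\<dots> = nu_tail \<mu> s ^ card I" by (simp add: p2)
  finally have "prob (space M - {w\<in>space M. \<exists>i\<in>I. 0 < SR_count T1 X i s w}) = nu_tail \<mu> s ^ card I" .
  then show "some_pos_prob M T1 X I s = 1 - nu_tail \<mu> s ^ card I"
    unfolding some_pos_prob_def using prob_compl[OF Em2] by simp
qed




context
  fixes \<mu> :: "real measure" and M :: "'w measure" and T1 X
  assumes H: "H_S_infty \<mu>" and iid: "iid_SR_family M \<mu> T1 X"
begin

lemma mu_prob: "prob_space \<mu>" and mu_sets: "sets \<mu> = sets borel"
  and mu_0: "measure \<mu> {..0} = 0" and mu_pos: "\<And>x. measure \<mu> {x<..} > 0"
  using H unfolding H_S_infty_def by auto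

lemma nu_prob: "prob_space (nu_of \<mu>)"
proof -
  have "prob_space M" using iid unfolding iid_SR_family_def by simp
  from prob_space.prob_space_distr[OF this iid_meas(1)[OF iid, of 0]] show ?thesis
    using iid unfolding iid_SR_family_def by simp
qed

lemma nu_sets: "sets (nu_of \<mu>) = sets borel" unfolding nu_of_def by simp

lemma nu_space: "space (nu_of \<mu>) = UNIV" using sets_eq_imp_space_eq[OF nu_sets] by simp

lemma mu_tail_meas: "(\<lambda>t. measure \<mu> {t<..}) \<in> borel_measurable borel"
proof -
  interpret mu: prob_space \<mu> by (rule mu_prob)
  have "mono (\<lambda>t. - measure \<mu> {t<..})"
    by (auto simp: mono_def mu_sets intro!: mu.finite_measure_mono)
  then have "(\<lambda>t. - (- measure \<mu> {t<..})) \<in> borel_measurable borel"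
    by (intro borel_measurable_uminus borel_measurable_mono)
  then show ?thesis by simp
qed

definition "dens = (\<lambda>t. ennreal (indicator {0<..} t * measure \<mu> {t<..} / mean_of \<mu>))"

lemma dens_meas: "dens \<in> borel_measurable lborel"
  unfolding dens_def using mu_tail_meas by measurable

lemma nu_emeasure: "A \<in> sets borel \<Longrightarrow> emeasure (nu_of \<mu>) A = (\<integral>\<^sup>+ x. dens x * indicator A x \<partial>lborel)"
  unfolding nu_of_def dens_def[symmetric] by (rule emeasure_density[OF dens_meas]) simp

lemma mean_pos: "mean_of \<mu> > 0"
proof (rule ccontr)
  assume "\<not> mean_of \<mu> > 0"
  then have "dens x = 0" for x
    unfolding dens_def by (auto simp: ennreal_eq_0_iff divide_nonneg_nonpos indicator_def)
  then have "emeasure (nu_of \<mu>) UNIV = 0" by (simp add: nu_emeasure)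
  moreover have "emeasure (nu_of \<mu>) UNIV = 1"
    using prob_space.emeasure_space_1[OF nu_prob] nu_space by simp
  ultimately show False by simp
qed

abbreviation "nu \<equiv> nu_tail \<mu>"

lemma nu_nonneg: "0 \<le> nu x" unfolding nu_tail_def by simp
lemma nu_le1: "nu x \<le> 1" unfolding nu_tail_def using prob_space.prob_le_1[OF nu_prob] by simp
lemma nu_mono: "x \<le> y \<Longrightarrow> nu y \<le> nu x"
  unfolding nu_tail_def
  by (rule finite_measure.finite_measure_mono[OF prob_space.axioms(1)[OF nu_prob]]) (auto simp: nu_sets)

lemma nu_compl: "nu x = 1 - measure (nu_of \<mu>) {..x}"
proof -
  have "measure (nu_of \<mu>) {..x} = measure (nu_of \<mu>) (space (nu_of \<mu>) - {x<..})"
    by (rule arg_cong[where f="measure (nu_of \<mu>)"]) (auto simp: nu_space)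
  also have "\<dots> = 1 - nu x" unfolding nu_tail_def
    by (subst prob_space.prob_compl[OF nu_prob]) (auto simp: nu_sets)
  finally show ?thesis by simp
qed

lemma nu_le0: assumes "x \<le> 0" shows "nu x = 1"
proof -
  have "emeasure (nu_of \<mu>) {..0} = (\<integral>\<^sup>+ t. dens t * indicator {..0} t \<partial>lborel)"
    by (rule nu_emeasure) simp
  also have "\<dots> = (\<integral>\<^sup>+ t. 0 \<partial>(lborel::real measure))"
    by (intro nn_integral_cong) (auto simp: dens_def indicator_def)
  finally have "measure (nu_of \<mu>) {..0} = 0" by (simp add: measure_def)
  moreover have "measure (nu_of \<mu>) {..x} \<le> measure (nu_of \<mu>) {..0}"
    using assms
    by (intro finite_measure.finite_measure_mono[OF prob_space.axioms(1)[OF nu_prob]]) (auto simp: nu_sets)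
  ultimately show ?thesis using nu_compl[of x] measure_nonneg[of "nu_of \<mu>" "{..x}"] by linarith
qed

lemma nu_lip: assumes "x \<le> y" shows "nu x - nu y \<le> (y - x) / mean_of \<mu>"
proof -
  interpret nu: prob_space "nu_of \<mu>" by (rule nu_prob)
  have "nu x - nu y = measure (nu_of \<mu>) ({x<..} - {y<..})" unfolding nu_tail_def
    using assms by (subst nu.finite_measure_Diff) (auto simp: nu_sets)
  also have "{x<..} - {y<..} = {x<..y}" by auto
  finally have eq: "nu x - nu y = measure (nu_of \<mu>) {x<..y}" .
  have "emeasure (nu_of \<mu>) {x<..y} = (\<integral>\<^sup>+ t. dens t * indicator {x<..y} t \<partial>lborel)"
    by (simp add: nu_emeasure)
  also have "\<dots> \<le> (\<integral>\<^sup>+ t. ennreal (1 / mean_of \<mu>) * indicator {x<..y} t \<partial>lborel)"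
  proof (intro nn_integral_mono)
    fix t
    have "indicator {0<..} t * measure \<mu> {t<..} \<le> (1::real)"
      using prob_space.prob_le_1[OF mu_prob] by (auto simp: indicator_def)
    then have "dens t \<le> ennreal (1 / mean_of \<mu>)"
      unfolding dens_def using mean_pos by (intro ennreal_leI divide_right_mono) auto
    then show "dens t * indicator {x<..y} t \<le> ennreal (1 / mean_of \<mu>) * indicator {x<..y} t"
      by (auto simp: indicator_def)
  qed
  also have "\<dots> = ennreal (1 / mean_of \<mu>) * ennreal (y - x)"
    using assms by (subst nn_integral_cmult_indicator) auto
  also have "\<dots> = ennreal ((y - x) / mean_of \<mu>)"
    using assms mean_pos by (simp add: ennreal_mult[symmetric])
  finally have "measure (nu_of \<mu>) {x<..y} \<le> (y - x) / mean_of \<mu>"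
    using assms mean_pos by (simp add: nu.emeasure_eq_measure ennreal_le_iff)
  then show ?thesis using eq by simp
qed

lemma nu_cont: "continuous_on UNIV nu"
proof -
  have b: "\<bar>nu x' - nu x\<bar> \<le> \<bar>x' - x\<bar> / mean_of \<mu>" for x x'
    using nu_lip[of x x'] nu_lip[of x' x] nu_mono[of x x'] nu_mono[of x' x]
    by (cases "x \<le> x'") (auto simp: abs_if)
  show ?thesis unfolding continuous_on_iff
  proof (intro ballI allI impI)
    fix x e :: real assume e: "0 < e"
    show "\<exists>d>0. \<forall>x'\<in>UNIV. dist x' x < d \<longrightarrow> dist (nu x') (nu x) < e"
    proof (intro exI[of _ "e * mean_of \<mu>"] conjI ballI impI)
      show "0 < e * mean_of \<mu>" using e mean_pos by simp
      fix x' assume "dist x' x < e * mean_of \<mu>"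
      then have "\<bar>x' - x\<bar> / mean_of \<mu> < e" using mean_pos by (simp add: dist_real_def field_simps)
      then show "dist (nu x') (nu x) < e" using b[of x' x] by (simp add: dist_real_def)
    qed
  qed
qed

lemma nu_pos: "nu x > 0"
proof (rule ccontr)
  assume "\<not> nu x > 0"
  then have z: "nu x = 0" using nu_nonneg[of x] by simp
  have "eventually (\<lambda>y. nu y / nu (1 * y) = 0) at_top"
    using eventually_ge_at_top[of x] by eventually_elim (use z nu_mono nu_nonneg in \<open>smt (verit) div_0\<close>)
  then have "((\<lambda>y. nu y / nu (1 * y)) \<longlongrightarrow> 0) at_top" by (rule tendsto_eventually)
  moreover have "\<forall>t>0. t = 1 \<longrightarrow> ((\<lambda>x. nu x / nu (t * x)) \<longlongrightarrow> 1) at_top"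
    using H unfolding H_S_infty_def by blast
  then have "((\<lambda>y. nu y / nu (1 * y)) \<longlongrightarrow> 1) at_top"
    by (metis zero_less_one)
  ultimately show False using tendsto_unique[of at_top] by force
qed

lemma nu_lim0: "(nu \<longlongrightarrow> 0) at_top"
proof -
  interpret nu: prob_space "nu_of \<mu>" by (rule nu_prob)
  have "(\<lambda>n. measure (nu_of \<mu>) {real n<..}) \<longlonglongrightarrow> measure (nu_of \<mu>) (\<Inter>n. {real n<..})"
    by (rule nu.finite_Lim_measure_decseq) (auto simp: nu_sets decseq_def)
  moreover have "(\<Inter>n. {real n<..}) = {}"
    by auto (meson leD real_arch_simple)
  ultimately have "(\<lambda>n. - nu (real n)) \<longlonglongrightarrow> - 0" unfolding nu_tail_def
    by (intro tendsto_minus) simp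
  then have "((\<lambda>x. - nu x) \<longlongrightarrow> - 0) at_top"
    by (intro tendsto_at_topI_sequentially_real) (auto simp: mono_def nu_mono)
  then show ?thesis using tendsto_minus_cancel by blast
qed


lemma a_prop: assumes l: "0 < l" shows "l * a_of \<mu> l = nu (a_of \<mu> l)" "0 < a_of \<mu> l"
proof -
  have "continuous_on {0..1/l} (\<lambda>a. l * a - nu a)"
    by (intro continuous_intros continuous_on_subset[OF nu_cont]) auto
  moreover have "(\<lambda>a. l * a - nu a) 0 \<le> 0" using nu_le0[of 0] by simp
  moreover have "0 \<le> (\<lambda>a. l * a - nu a) (1/l)" using nu_le1[of "1/l"] l by simp
  ultimately obtain a where "l * a - nu a = 0" using IVT'[of "\<lambda>a. l * a - nu a" 0 0 "1/l"] l by auto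
  then have ex: "l * a = nu a" by simp
  have uniq: "b = c" if "l * b = nu b" "l * c = nu c" for b c
  proof (rule ccontr)
    assume "b \<noteq> c"
    then consider "b < c" | "c < b" by linarith
    then show False
    proof cases
      case 1 then show False using that nu_mono[of b c] l by (smt (verit) mult_strict_left_mono)
    next
      case 2 then show False using that nu_mono[of c b] l by (smt (verit) mult_strict_left_mono)
    qed
  qed
  have "\<exists>!a. l * a = nu a" using ex uniq by blast
  then show eq: "l * a_of \<mu> l = nu (a_of \<mu> l)" unfolding a_of_def by (rule theI')
  show "0 < a_of \<mu> l"
  proof (rule ccontr)
    assume "\<not> 0 < a_of \<mu> l"
    then have "nu (a_of \<mu> l) = 1" "l * a_of \<mu> l \<le> 0" using nu_le0 l by (auto simp: mult_nonneg_nonpos)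
    then show False using eq by simp
  qed
qed

lemma a_lim: "filterlim (a_of \<mu>) at_top (at_right 0)"
  unfolding filterlim_at_top
proof
  fix Z :: real
  define K where "K = max Z 1"
  define c where "c = nu K / K"
  have K: "K \<ge> 1" "Z \<le> K" unfolding K_def by auto
  have c: "c > 0" unfolding c_def using nu_pos[of K] K by simp
  show "eventually (\<lambda>l. Z \<le> a_of \<mu> l) (at_right 0)"
    unfolding eventually_at_right_field
  proof (intro exI[of _ c] conjI allI impI)
    show "0 < c" by fact
    fix l :: real assume l: "0 < l" "l < c"
    show "Z \<le> a_of \<mu> l"
    proof (rule ccontr)
      assume "\<not> Z \<le> a_of \<mu> l"
      then have aK: "a_of \<mu> l \<le> K" using K by simp
      have "l * a_of \<mu> l \<le> l * K" using aK l by simp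
      also have "\<dots> < c * K" using l K by simp
      also have "\<dots> = nu K" unfolding c_def using K by simp
      also have "\<dots> \<le> nu (a_of \<mu> l)" using nu_mono[OF aK] .
      finally show False using a_prop(1)[OF l(1)] by simp
    qed
  qed
qed

lemma la_lim: "((\<lambda>l. l * a_of \<mu> l) \<longlongrightarrow> 0) (at_right 0)"
proof -
  have "((\<lambda>l. nu (a_of \<mu> l)) \<longlongrightarrow> 0) (at_right 0)"
    by (rule filterlim_compose[OF nu_lim0 a_lim])
  moreover have "eventually (\<lambda>l. nu (a_of \<mu> l) = l * a_of \<mu> l) (at_right 0)"
    using eventually_at_right_less[of 0] by eventually_elim (simp add: a_prop(1))
  ultimately show ?thesis by (rule Lim_transform_eventually)
qed

lemma ev_small: "eventually (\<lambda>l. 0 < l \<and> l * a_of \<mu> l \<le> 1/2) (at_right (0::real))"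
proof -
  have "eventually (\<lambda>l. l * a_of \<mu> l < 1/2) (at_right 0)"
    using la_lim by (rule order_tendstoD) simp
  then show ?thesis using eventually_at_right_less[of 0]
    by eventually_elim auto
qed

lemma n_bounds: assumes "0 < l" "l * a_of \<mu> l \<le> 1/2"
  shows "real (n_of \<mu> l) \<le> 1 / (l * a_of \<mu> l)" "1 / (l * a_of \<mu> l) - 1 < real (n_of \<mu> l)"
    "1 \<le> n_of \<mu> l"
proof -
  have p: "0 < l * a_of \<mu> l" using assms a_prop(2)[OF assms(1)] by simp
  have g: "2 \<le> 1 / (l * a_of \<mu> l)" using p assms(2) by (simp add: field_simps)
  have eq: "real (n_of \<mu> l) = of_int \<lfloor>1 / (l * a_of \<mu> l)\<rfloor>"
  proof -
    have "0 \<le> \<lfloor>1 / (l * a_of \<mu> l)\<rfloor>" using g by linarith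
    then show ?thesis unfolding n_of_def by (rule of_nat_nat)
  qed
  show "real (n_of \<mu> l) \<le> 1 / (l * a_of \<mu> l)" unfolding eq by simp
  show "1 / (l * a_of \<mu> l) - 1 < real (n_of \<mu> l)" unfolding eq by linarith
  show "1 \<le> n_of \<mu> l" using eq g by linarith
qed

end



lemma pow_to_0:
  fixes q :: "'a \<Rightarrow> real" and c :: "'a \<Rightarrow> nat"
  assumes "eventually (\<lambda>l. 0 \<le> q l \<and> q l \<le> 1) F" "filterlim (\<lambda>l. q l * real (c l)) at_top F"
  shows "((\<lambda>l. (1 - q l) ^ c l) \<longlongrightarrow> 0) F"
proof (rule tendsto_sandwich[OF _ _ tendsto_const])
  show "eventually (\<lambda>l. 0 \<le> (1 - q l) ^ c l) F" using assms(1) by eventually_elim simp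
  show "eventually (\<lambda>l. (1 - q l) ^ c l \<le> exp (- (q l * real (c l)))) F"
    using assms(1)
  proof eventually_elim
    case (elim l)
    have "(1 - q l) ^ c l \<le> exp (- q l) ^ c l"
      using elim exp_ge_add_one_self[of "- q l"] by (intro power_mono) auto
    also have "\<dots> = exp (- (q l * real (c l)))" by (simp add: exp_of_nat_mult[symmetric] mult.commute)
    finally show ?case .
  qed
  show "((\<lambda>l. exp (- (q l * real (c l)))) \<longlongrightarrow> 0) F"
    by (intro filterlim_compose[OF exp_at_bot] filterlim_compose[OF filterlim_uminus_at_bot_at_top] assms(2))
qed

lemma pow_to_1:
  fixes q :: "'a \<Rightarrow> real" and c :: "'a \<Rightarrow> nat"
  assumes "eventually (\<lambda>l. 0 \<le> q l \<and> q l \<le> 1) F" "((\<lambda>l. q l * real (c l)) \<longlongrightarrow> 0) F"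
  shows "((\<lambda>l. (1 - q l) ^ c l) \<longlongrightarrow> 1) F"
proof (rule tendsto_sandwich)
  show "eventually (\<lambda>l. 1 - q l * real (c l) \<le> (1 - q l) ^ c l) F" using assms(1)
  proof eventually_elim
    case (elim l)
    have "1 + real (c l) * (- q l) \<le> (1 + - q l) ^ c l"
      by (rule Bernoulli_inequality) (use elim in auto)
    then show ?case by (simp add: mult.commute)
  qed
  show "eventually (\<lambda>l. (1 - q l) ^ c l \<le> 1) F" using assms(1)
    by eventually_elim (auto intro: power_le_one)
  show "((\<lambda>l. 1 - q l * real (c l)) \<longlongrightarrow> 1) F" using tendsto_diff[OF tendsto_const assms(2), of 1] by simp
qed simp

lemma pow_small:
  fixes q :: "'a \<Rightarrow> real" and c :: "'a \<Rightarrow> nat"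
  assumes "eventually (\<lambda>l. 0 \<le> q l \<and> q l \<le> 1 \<and> 1 \<le> c l) F" "(q \<longlongrightarrow> 0) F"
  shows "((\<lambda>l. 1 - q l ^ c l) \<longlongrightarrow> 1) F"
proof -
  have "((\<lambda>l. q l ^ c l) \<longlongrightarrow> 0) F"
  proof (rule tendsto_sandwich[OF _ _ tendsto_const assms(2)])
    show "eventually (\<lambda>l. 0 \<le> q l ^ c l) F" using assms(1) by eventually_elim simp
    show "eventually (\<lambda>l. q l ^ c l \<le> q l) F" using assms(1)
    proof eventually_elim
      case (elim l)
      then have "q l ^ c l \<le> q l ^ 1" by (intro power_decreasing) auto
      then show ?case by simp
    qed
  qed
  from tendsto_diff[OF tendsto_const this, of 1] show ?thesis by simp
qed

lemma card_interval:
  fixes a b x :: real assumes "a < b" "0 \<le> x"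
  shows "finite {\<lfloor>a*x\<rfloor>..\<lfloor>b*x\<rfloor>}" "{\<lfloor>a*x\<rfloor>..\<lfloor>b*x\<rfloor>} \<noteq> {}"
    "(b - a) * x \<le> real (card {\<lfloor>a*x\<rfloor>..\<lfloor>b*x\<rfloor>})"
    "real (card {\<lfloor>a*x\<rfloor>..\<lfloor>b*x\<rfloor>}) \<le> (b - a) * x + 2"
    "1 \<le> card {\<lfloor>a*x\<rfloor>..\<lfloor>b*x\<rfloor>}"
proof -
  have le: "a * x \<le> b * x" using assms by (intro mult_right_mono) auto
  then have fl: "\<lfloor>a*x\<rfloor> \<le> \<lfloor>b*x\<rfloor>" by (rule floor_mono)
  have c: "real (card {\<lfloor>a*x\<rfloor>..\<lfloor>b*x\<rfloor>}) = of_int (\<lfloor>b*x\<rfloor> - \<lfloor>a*x\<rfloor> + 1)"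
    using fl by simp
  show "finite {\<lfloor>a*x\<rfloor>..\<lfloor>b*x\<rfloor>}" by simp
  show "{\<lfloor>a*x\<rfloor>..\<lfloor>b*x\<rfloor>} \<noteq> {}" using fl by simp
  show "(b - a) * x \<le> real (card {\<lfloor>a*x\<rfloor>..\<lfloor>b*x\<rfloor>})" unfolding c
    using floor_correct[of "a*x"] floor_correct[of "b*x"] by (simp add: left_diff_distrib) linarith
  show "real (card {\<lfloor>a*x\<rfloor>..\<lfloor>b*x\<rfloor>}) \<le> (b - a) * x + 2" unfolding c
    using floor_correct[of "a*x"] floor_correct[of "b*x"] by (simp add: left_diff_distrib) linarith
  show "1 \<le> card {\<lfloor>a*x\<rfloor>..\<lfloor>b*x\<rfloor>}" using fl by simp
qed




theorem mainTheorem10: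
  fixes \<mu> :: "real measure" and M :: "'w measure"
    and T1 :: "int \<Rightarrow> 'w \<Rightarrow> real" and X :: "int \<Rightarrow> nat \<Rightarrow> 'w \<Rightarrow> real"
    and m :: "real \<Rightarrow> nat" and a b :: real
  assumes "H_S_infty \<mu>"
    and "admissible_m \<mu> m"
    and "iid_SR_family M \<mu> T1 X"
    and "a < b"
  shows "(\<forall>t<1. ((\<lambda>l. all_pos_prob M T1 X {\<lfloor>a * real (m l)\<rfloor>..\<lfloor>b * real (m l)\<rfloor>} (a_of \<mu> l * t))
                 \<longlongrightarrow> 0) (at_right 0))
       \<and> (\<forall>t\<ge>1. ((\<lambda>l. all_pos_prob M T1 X {\<lfloor>a * real (m l)\<rfloor>..\<lfloor>b * real (m l)\<rfloor>} (a_of \<mu> l * t))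
                 \<longlongrightarrow> 1) (at_right 0))
       \<and> (\<forall>t<1. ((\<lambda>l. all_pos_prob M T1 X {\<lfloor>a * real (n_of \<mu> l)\<rfloor>..\<lfloor>b * real (n_of \<mu> l)\<rfloor>} (a_of \<mu> l * t))
                 \<longlongrightarrow> 0) (at_right 0))
       \<and> (\<forall>t>1. ((\<lambda>l. all_pos_prob M T1 X {\<lfloor>a * real (n_of \<mu> l)\<rfloor>..\<lfloor>b * real (n_of \<mu> l)\<rfloor>} (a_of \<mu> l * t))
                 \<longlongrightarrow> 1) (at_right 0))
       \<and> (\<forall>t>0. ((\<lambda>l. some_pos_prob M T1 X {\<lfloor>a * real (m l)\<rfloor>..\<lfloor>b * real (m l)\<rfloor>} (a_of \<mu> l * t))
                 \<longlongrightarrow> 1) (at_right 0))"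
proof -
  note H = assms(1) and iid = assms(3) and ab = assms(4)
  let ?nu = "nu_tail \<mu>"
  let ?A = "a_of \<mu>"
  let ?n = "n_of \<mu>"
  let ?c = "\<lambda>N l. card {\<lfloor>a * real (N l)\<rfloor>..\<lfloor>b * real (N l)\<rfloor>}"
  have mfacts: "filterlim m at_top (at_right 0)"
    "((\<lambda>l. real (m l) / real (?n l)) \<longlongrightarrow> 0) (at_right 0)"
    "\<And>z. 0 \<le> z \<Longrightarrow> z < 1 \<Longrightarrow> filterlim (\<lambda>l. real (m l) * ?nu (?A l * z)) at_top (at_right 0)"
    using assms(2) unfolding admissible_m_def by auto
  have Hr: "\<And>t. 0 < t \<Longrightarrow> t < 1 \<Longrightarrow> ((\<lambda>x. ?nu x / ?nu (t * x)) \<longlongrightarrow> 0) at_top"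
    "\<And>t. 1 < t \<Longrightarrow> filterlim (\<lambda>x. ?nu x / ?nu (t * x)) at_top at_top"
    using H unfolding H_S_infty_def by auto
  note nn = nu_nonneg[OF H iid] and le1 = nu_le1[OF H iid] and nmono = nu_mono[OF H iid]
    and npos = nu_pos[OF H iid] and nle0 = nu_le0[OF H iid]
  note aprop = a_prop[OF H iid] and alim = a_lim[OF H iid] and lalim = la_lim[OF H iid]
    and evs = ev_small[OF H iid] and nb = n_bounds[OF H iid] and nlim0 = nu_lim0[OF H iid]
  have qbound: "0 \<le> ?nu x \<and> ?nu x \<le> 1" for x using nn le1 by auto
  have ci: "finite {\<lfloor>a * real (N l)\<rfloor>..\<lfloor>b * real (N l)\<rfloor>}" "{\<lfloor>a * real (N l)\<rfloor>..\<lfloor>b * real (N l)\<rfloor>} \<noteq> {}"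
    "(b - a) * real (N l) \<le> real (?c N l)" "real (?c N l) \<le> (b - a) * real (N l) + 2" "1 \<le> ?c N l"
    for N :: "real \<Rightarrow> nat" and l
    using card_interval[OF ab, of "real (N l)"] by auto
  have PF: "all_pos_prob M T1 X {\<lfloor>a * real (N l)\<rfloor>..\<lfloor>b * real (N l)\<rfloor>} s = (1 - ?nu s) ^ ?c N l"
    "some_pos_prob M T1 X {\<lfloor>a * real (N l)\<rfloor>..\<lfloor>b * real (N l)\<rfloor>} s = 1 - ?nu s ^ ?c N l"
    for N :: "real \<Rightarrow> nat" and l s
    using prob_formulas[OF iid mu_prob[OF H iid] mu_sets[OF H iid] mu_0[OF H iid] mu_pos[OF H iid, of 1] ci(1)[of N l] ci(2)[of N l]]
    by auto
  have qlim: "((\<lambda>l. ?nu (?A l * t)) \<longlongrightarrow> 0) (at_right 0)" if "0 < t" for t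
    by (rule filterlim_compose[OF nlim0 filterlim_at_top_mult_tendsto_pos[OF tendsto_const that alim]])
  have nonpos: "((\<lambda>l. (1 - ?nu (?A l * t)) ^ ?c N l) \<longlongrightarrow> 0) (at_right 0)" if "t \<le> 0" for t N
  proof (rule tendsto_eventually)
    show "eventually (\<lambda>l. (1 - ?nu (?A l * t)) ^ ?c N l = 0) (at_right 0)"
      using eventually_at_right_less[of 0]
    proof eventually_elim
      case (elim l)
      have "?A l * t \<le> 0" using aprop(2)[OF elim] that by (simp add: mult_nonneg_nonpos)
      then have "?nu (?A l * t) = 1" by (rule nle0)
      then show ?case using ci(5)[of N l] by (simp add: zero_power)
    qed
  qed
  have P1: "((\<lambda>l. all_pos_prob M T1 X {\<lfloor>a * real (m l)\<rfloor>..\<lfloor>b * real (m l)\<rfloor>} (?A l * t)) \<longlongrightarrow> 0) (at_right 0)"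
    if t: "t < 1" for t
  proof (cases "t \<le> 0")
    case True then show ?thesis unfolding PF using nonpos by blast
  next
    case False
    show ?thesis unfolding PF
    proof (rule pow_to_0)
      show "eventually (\<lambda>l. 0 \<le> ?nu (?A l * t) \<and> ?nu (?A l * t) \<le> 1) (at_right 0)" using qbound by simp
      have "filterlim (\<lambda>l. (b - a) * (real (m l) * ?nu (?A l * t))) at_top (at_right 0)"
        using ab False t by (intro filterlim_tendsto_pos_mult_at_top[OF tendsto_const] mfacts(3)) auto
      then show "filterlim (\<lambda>l. ?nu (?A l * t) * real (?c m l)) at_top (at_right 0)"
      proof (rule filterlim_at_top_mono)
        show "eventually (\<lambda>l. (b - a) * (real (m l) * ?nu (?A l * t)) \<le> ?nu (?A l * t) * real (?c m l)) (at_right 0)"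
        proof (rule always_eventually, intro allI)
          fix l
          show "(b - a) * (real (m l) * ?nu (?A l * t)) \<le> ?nu (?A l * t) * real (?c m l)"
            using mult_right_mono[OF ci(3)[of m l] nn[of "?A l * t"]] by (simp add: algebra_simps)
        qed
      qed
    qed
  qed

  have P2: "((\<lambda>l. all_pos_prob M T1 X {\<lfloor>a * real (m l)\<rfloor>..\<lfloor>b * real (m l)\<rfloor>} (?A l * t)) \<longlongrightarrow> 1) (at_right 0)"
    if t: "1 \<le> t" for t
    unfolding PF
  proof (rule pow_to_1)
    show "eventually (\<lambda>l. 0 \<le> ?nu (?A l * t) \<and> ?nu (?A l * t) \<le> 1) (at_right 0)" using qbound by simp
    show "((\<lambda>l. ?nu (?A l * t) * real (?c m l)) \<longlongrightarrow> 0) (at_right 0)"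
    proof (rule tendsto_sandwich[OF _ _ tendsto_const])
      show "eventually (\<lambda>l. 0 \<le> ?nu (?A l * t) * real (?c m l)) (at_right 0)" using nn by simp
      show "((\<lambda>l. (b - a) * (real (m l) / real (?n l)) + 2 * (l * ?A l)) \<longlongrightarrow> 0) (at_right 0)"
        using tendsto_add[OF tendsto_mult[OF tendsto_const mfacts(2)] tendsto_mult[OF tendsto_const lalim], of "b - a" 2]
        by simp
      show "eventually (\<lambda>l. ?nu (?A l * t) * real (?c m l) \<le> (b - a) * (real (m l) / real (?n l)) + 2 * (l * ?A l)) (at_right 0)"
        using evs
      proof eventually_elim
        case (elim l)
        have l: "0 < l" "l * ?A l \<le> 1/2" using elim by auto
        define L where "L = l * ?A l"
        have Lp: "0 < L" unfolding L_def using aprop(2)[OF l(1)] l by simp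
        have "?A l \<le> ?A l * t" using aprop(2)[OF l(1)] t mult_left_mono[of 1 t "?A l"] by simp
        then have qL: "?nu (?A l * t) \<le> L" unfolding L_def using nmono aprop(1)[OF l(1)] by metis
        have n1: "1 \<le> real (?n l)" using nb(3)[OF l] by simp
        have "real (?n l) \<le> 1 / L" unfolding L_def using nb(1)[OF l] .
        then have L1n: "L \<le> 1 / real (?n l)" using Lp n1 by (simp add: field_simps)
        have "?nu (?A l * t) * real (?c m l) \<le> L * real (?c m l)"
          using qL by (intro mult_right_mono) auto
        also have "\<dots> \<le> L * ((b - a) * real (m l) + 2)"
          using ci(4)[of m l] Lp by (intro mult_left_mono) auto
        also have "\<dots> = (b - a) * (real (m l) * L) + 2 * L" by (simp add: algebra_simps)
        also have "\<dots> \<le> (b - a) * (real (m l) * (1 / real (?n l))) + 2 * L"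
          using L1n ab by (intro add_right_mono mult_left_mono) auto
        finally show ?case unfolding L_def by simp
      qed
    qed
  qed
  have P3: "((\<lambda>l. all_pos_prob M T1 X {\<lfloor>a * real (?n l)\<rfloor>..\<lfloor>b * real (?n l)\<rfloor>} (?A l * t)) \<longlongrightarrow> 0) (at_right 0)"
    if t: "t < 1" for t
  proof (cases "t \<le> 0")
    case True then show ?thesis unfolding PF using nonpos by blast
  next
    case False
    define R where "R = (\<lambda>l. ?nu (?A l * t) / ?nu (?A l))"
    have "((\<lambda>l. ?nu (?A l) / ?nu (t * ?A l)) \<longlongrightarrow> 0) (at_right 0)"
      by (rule filterlim_compose[OF Hr(1) alim]) (use False t in auto)
    then have "filterlim (\<lambda>l. inverse (?nu (?A l) / ?nu (t * ?A l))) at_top (at_right 0)"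
      by (rule filterlim_inverse_at_top) (use npos in \<open>simp\<close>)
    moreover have "(\<lambda>l. inverse (?nu (?A l) / ?nu (t * ?A l))) = R"
      unfolding R_def by (auto simp: mult.commute)
    ultimately have Rlim: "filterlim R at_top (at_right 0)" by simp
    show ?thesis unfolding PF
    proof (rule pow_to_0)
      show "eventually (\<lambda>l. 0 \<le> ?nu (?A l * t) \<and> ?nu (?A l * t) \<le> 1) (at_right 0)" using qbound by simp
      have "filterlim (\<lambda>l. (b - a) * (-1 + R l)) at_top (at_right 0)"
        using ab by (intro filterlim_tendsto_pos_mult_at_top[OF tendsto_const] filterlim_tendsto_add_at_top[OF tendsto_const Rlim]) auto
      then show "filterlim (\<lambda>l. ?nu (?A l * t) * real (?c ?n l)) at_top (at_right 0)"
      proof (rule filterlim_at_top_mono)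
        show "eventually (\<lambda>l. (b - a) * (-1 + R l) \<le> ?nu (?A l * t) * real (?c ?n l)) (at_right 0)"
          using evs
        proof eventually_elim
          case (elim l)
          have l: "0 < l" "l * ?A l \<le> 1/2" using elim by auto
          define L where "L = l * ?A l"
          define q where "q = ?nu (?A l * t)"
          have Lnu: "L = ?nu (?A l)" unfolding L_def using aprop(1)[OF l(1)] .
          have Lp: "0 < L" unfolding Lnu by (rule npos)
          have q: "0 \<le> q" "q \<le> 1" unfolding q_def using qbound by auto
          have nlow: "1 / L - 1 \<le> real (?n l)" using nb(2)[OF l] unfolding L_def by simp
          have "(b - a) * (-1 + R l) \<le> (b - a) * (q / L - q)"
            using ab q unfolding R_def Lnu q_def by (intro mult_left_mono) auto
          also have "\<dots> = (b - a) * (q * (1 / L - 1))" by (simp add: algebra_simps)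
          also have "\<dots> \<le> (b - a) * (q * real (?n l))"
            using ab q nlow by (intro mult_left_mono) auto
          also have "\<dots> = q * ((b - a) * real (?n l))" by simp
          also have "\<dots> \<le> q * real (?c ?n l)"
            using ci(3)[of ?n l] q by (intro mult_left_mono) auto
          finally show ?case unfolding q_def .
        qed
      qed
    qed
  qed
  have P4: "((\<lambda>l. all_pos_prob M T1 X {\<lfloor>a * real (?n l)\<rfloor>..\<lfloor>b * real (?n l)\<rfloor>} (?A l * t)) \<longlongrightarrow> 1) (at_right 0)"
    if t: "1 < t" for t
  proof -
    define R where "R = (\<lambda>l. ?nu (?A l * t) / ?nu (?A l))"
    have "((\<lambda>l. inverse (?nu (?A l) / ?nu (t * ?A l))) \<longlongrightarrow> 0) (at_right 0)"
      by (rule tendsto_inverse_0_at_top[OF filterlim_compose[OF Hr(2) alim]]) (use t in auto)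
    moreover have "(\<lambda>l. inverse (?nu (?A l) / ?nu (t * ?A l))) = R"
      unfolding R_def by (auto simp: mult.commute)
    ultimately have Rlim: "(R \<longlongrightarrow> 0) (at_right 0)" by simp
    show ?thesis unfolding PF
    proof (rule pow_to_1)
      show "eventually (\<lambda>l. 0 \<le> ?nu (?A l * t) \<and> ?nu (?A l * t) \<le> 1) (at_right 0)" using qbound by simp
      show "((\<lambda>l. ?nu (?A l * t) * real (?c ?n l)) \<longlongrightarrow> 0) (at_right 0)"
      proof (rule tendsto_sandwich[OF _ _ tendsto_const])
        show "eventually (\<lambda>l. 0 \<le> ?nu (?A l * t) * real (?c ?n l)) (at_right 0)" using nn by simp
        show "((\<lambda>l. (b - a) * R l + 2 * ?nu (?A l * t)) \<longlongrightarrow> 0) (at_right 0)"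
          using tendsto_add[OF tendsto_mult[OF tendsto_const[of "b - a"] Rlim] tendsto_mult[OF tendsto_const[of 2] qlim[of t]]] t
          by simp
        show "eventually (\<lambda>l. ?nu (?A l * t) * real (?c ?n l) \<le> (b - a) * R l + 2 * ?nu (?A l * t)) (at_right 0)"
          using evs
        proof eventually_elim
          case (elim l)
          have l: "0 < l" "l * ?A l \<le> 1/2" using elim by auto
          define L where "L = l * ?A l"
          define q where "q = ?nu (?A l * t)"
          have Lnu: "L = ?nu (?A l)" unfolding L_def using aprop(1)[OF l(1)] .
          have Lp: "0 < L" unfolding Lnu by (rule npos)
          have q: "0 \<le> q" "q \<le> 1" unfolding q_def using qbound by auto
          have nup: "real (?n l) \<le> 1 / L" using nb(1)[OF l] unfolding L_def by simp
          have "q * real (?c ?n l) \<le> q * ((b - a) * real (?n l) + 2)"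
            using ci(4)[of ?n l] q by (intro mult_left_mono) auto
          also have "\<dots> \<le> q * ((b - a) * (1 / L) + 2)"
            using q ab nup by (intro mult_left_mono add_right_mono) auto
          also have "\<dots> = (b - a) * (q / L) + 2 * q" by (simp add: algebra_simps)
          finally show ?case unfolding q_def R_def Lnu .
        qed
      qed
    qed
  qed
  have P5: "((\<lambda>l. some_pos_prob M T1 X {\<lfloor>a * real (m l)\<rfloor>..\<lfloor>b * real (m l)\<rfloor>} (?A l * t)) \<longlongrightarrow> 1) (at_right 0)"
    if t: "0 < t" for t
    unfolding PF
  proof (rule pow_small)
    show "eventually (\<lambda>l. 0 \<le> ?nu (?A l * t) \<and> ?nu (?A l * t) \<le> 1 \<and> 1 \<le> ?c m l) (at_right 0)"
      using qbound ci(5) by simp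
    show "((\<lambda>l. ?nu (?A l * t)) \<longlongrightarrow> 0) (at_right 0)" by (rule qlim[OF t])
  qed
  show ?thesis using P1 P2 P3 P4 P5 by blast
qed


end
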